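(* Let $G$ be a po-group. The po-group $\mathbb Z \overrightarrow{\times} G$ satisfies RDP$_1$ if and only if $G$ is directed and satisfies RDP$_1$.
   Context: A po-group is a (not necessarily Abelian, additively written) group with a partial order $\le$ such that $a\le b$ implies $x+a+y\le x+b+y$; $G^+$ is its positive cone; $G$ is directed if any two elements have a common upper bound. $\mathbb Z \overrightarrow{\times} G$ is the group $\mathbb Z\times G$ (componentwise operation) with the lexicographic order: $(m,g)\le(n,h)$ iff $m<n$, or $m=n$ and $g\le h$. RDP$_1$: for all $a_1,a_2,b_1,b_2$ in the positive cone with $a_1+a_2=b_1+b_2$ there are positive $c_{11},c_{12},c_{21},c_{22}$ with $a_1=c_{11}+c_{12}$, $a_2=c_{21}+c_{22}$, $b_1=c_{11}+c_{21}$, $b_2=c_{12}+c_{22}$, such that $0\le x\le c_{12}$ and $0\le y\le c_{21}$ imply $x+y=y+x$. *)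

theory Defs
  imports Main "HOL-Library.Product_Plus"
begin

definition po_group :: "('a::group_add \<Rightarrow> 'a \<Rightarrow> bool) \<Rightarrow> bool" where
  "po_group le \<longleftrightarrow>
     (\<forall>a. le a a) \<and>
     (\<forall>a b. le a b \<and> le b a \<longrightarrow> a = b) \<and>
     (\<forall>a b c. le a b \<and> le b c \<longrightarrow> le a c) \<and>
     (\<forall>a b x y. le a b \<longrightarrow> le (x + a + y) (x + b + y))"

definition directed :: "('a \<Rightarrow> 'a \<Rightarrow> bool) \<Rightarrow> bool" where
  "directed le \<longleftrightarrow> (\<forall>a b. \<exists>c. le a c \<and> le b c)"

text \<open>Lexicographic order on Z x G (group structure is componentwise).\<close>
definition lex_le :: "('a \<Rightarrow> 'a \<Rightarrow> bool) \<Rightarrow> int \<times> 'a \<Rightarrow> int \<times> 'a \<Rightarrow> bool" where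
  "lex_le le p q \<longleftrightarrow> fst p < fst q \<or> (fst p = fst q \<and> le (snd p) (snd q))"

definition RDP1 :: "('a::group_add \<Rightarrow> 'a \<Rightarrow> bool) \<Rightarrow> bool" where
  "RDP1 le \<longleftrightarrow>
     (\<forall>a1 a2 b1 b2. le 0 a1 \<and> le 0 a2 \<and> le 0 b1 \<and> le 0 b2 \<and> a1 + a2 = b1 + b2 \<longrightarrow>
        (\<exists>c11 c12 c21 c22. le 0 c11 \<and> le 0 c12 \<and> le 0 c21 \<and> le 0 c22 \<and>
           a1 = c11 + c12 \<and> a2 = c21 + c22 \<and> b1 = c11 + c21 \<and> b2 = c12 + c22 \<and>
           (\<forall>x y. le 0 x \<and> le x c12 \<and> le 0 y \<and> le y c21 \<longrightarrow> x + y = y + x)))"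

end

theory Submission
  imports Defs
begin

lemma lex_pos: "lex_le le 0 p \<longleftrightarrow> 0 < fst p \<or> (fst p = 0 \<and> le 0 (snd p))"
  by (simp add: lex_le_def)

lemma lex_le_zero_antisym:
  assumes "po_group le" "lex_le le 0 x" "lex_le le x 0"
  shows "x = 0"
proof -
  have "fst x = 0" using assms(2,3) by (auto simp: lex_le_def)
  moreover have "le 0 (snd x)" "le (snd x) 0" using assms(2,3) \<open>fst x = 0\<close> by (auto simp: lex_le_def)
  then have "snd x = 0" using assms(1) unfolding po_group_def by blast
  ultimately show ?thesis by (simp add: prod_eq_iff)
qed

lemma po_add:
  assumes "po_group le" "le a b" shows "le (x + a + y) (x + b + y)"
  using assms unfolding po_group_def by blast

lemma po_addl:
  assumes "po_group le" "le a b" shows "le (x + a) (x + b)"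
  using po_add[OF assms, of x 0] by simp

lemma po_addr:
  assumes "po_group le" "le a b" shows "le (a + y) (b + y)"
  using po_add[OF assms, of 0 y] by simp

lemma upper_of_zero:
  fixes le :: "'a::group_add \<Rightarrow> 'a \<Rightarrow> bool"
  assumes po: "po_group le" and R: "RDP1 (lex_le le)"
  shows "\<exists>u. le 0 u \<and> le g u"
proof -
  have p1: "lex_le le 0 ((1::int), g)" "lex_le le 0 ((1::int), -g)" "lex_le le 0 ((1::int), 0::'a)"
    by (simp_all add: lex_le_def)
  have s: "((1::int), g) + (1, -g) = (1, 0) + (1, 0)" by simp
  from R[unfolded RDP1_def, rule_format, OF conjI[OF p1(1) conjI[OF p1(2) conjI[OF p1(3) conjI[OF p1(3) s]]]]]
  obtain c11 c12 c21 c22 where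
    c: "lex_le le 0 c11" "lex_le le 0 c12" "lex_le le 0 c21" "lex_le le 0 c22"
    "((1::int), g) = c11 + c12" "((1::int), -g) = c21 + c22" "((1::int), 0) = c11 + c21" "((1::int),0) = c12 + c22"
    by blast
  have f: "fst c11 \<ge> 0" "fst c12 \<ge> 0" "fst c21 \<ge> 0" "fst c22 \<ge> 0"
    using c(1-4) by (auto simp: lex_le_def)
  have e1: "fst c11 + fst c12 = 1" "fst c21 + fst c22 = 1" "fst c11 + fst c21 = 1" "fst c12 + fst c22 = 1"
    using arg_cong[OF c(5), of fst] arg_cong[OF c(6), of fst] arg_cong[OF c(7), of fst] arg_cong[OF c(8), of fst] by simp_all
  have e2: "g = snd c11 + snd c12" "-g = snd c21 + snd c22" "0 = snd c11 + snd c21" "0 = snd c12 + snd c22"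
    using arg_cong[OF c(5), of snd] arg_cong[OF c(6), of snd] arg_cong[OF c(7), of snd] arg_cong[OF c(8), of snd] by simp_all
  show ?thesis
  proof (cases "fst c11 = 0")
    case True
    then have "fst c22 = 0" using e1 f by linarith
    then have "le 0 (snd c22)" using c(4) by (auto simp: lex_le_def)
    have "le 0 (snd c11)" using c(1) True by (auto simp: lex_le_def)
    have "snd c12 = - snd c22" using e2(4)[symmetric] by (simp add: add_eq_0_iff2)
    have "le (- snd c22 + 0) (- snd c22 + snd c22)" using po_addl[OF po \<open>le 0 (snd c22)\<close>] .
    then have "le (- snd c22) 0" by simp
    then have "le (snd c11 + - snd c22) (snd c11 + 0)" using po_addl[OF po] by blast
    then have "le g (snd c11)" using e2(1) \<open>snd c12 = - snd c22\<close> by simp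
    then show ?thesis using \<open>le 0 (snd c11)\<close> by blast
  next
    case False
    then have "fst c12 = 0" "fst c21 = 0" using e1 f by linarith+
    then have "le 0 (snd c12)" "le 0 (snd c21)" using c(2,3) by (auto simp: lex_le_def)
    have "snd c11 = - snd c21" using e2(3)[symmetric] by (simp add: add_eq_0_iff2)
    have "le (- snd c21 + 0) (- snd c21 + snd c21)" using po_addl[OF po \<open>le 0 (snd c21)\<close>] .
    then have "le (- snd c21) 0" by simp
    then have "le (- snd c21 + snd c12) (0 + snd c12)" using po_addr[OF po] by blast
    then have "le g (snd c12)" using e2(1) \<open>snd c11 = - snd c21\<close> by simp
    then show ?thesis using \<open>le 0 (snd c12)\<close> by blast
  qed
qed


lemma fwd_RDP1:
  fixes le :: "'a::group_add \<Rightarrow> 'a \<Rightarrow> bool"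
  assumes po: "po_group le" and R: "RDP1 (lex_le le)"
  shows "RDP1 le"
  unfolding RDP1_def
proof (intro allI impI)
  fix a1 a2 b1 b2 :: 'a
  assume h: "le 0 a1 \<and> le 0 a2 \<and> le 0 b1 \<and> le 0 b2 \<and> a1 + a2 = b1 + b2"
  have p: "lex_le le 0 ((0::int), a1)" "lex_le le 0 ((0::int), a2)" "lex_le le 0 ((0::int), b1)" "lex_le le 0 ((0::int), b2)"
    using h by (simp_all add: lex_le_def)
  have s: "((0::int), a1) + (0, a2) = (0, b1) + (0, b2)" using h by simp
  from R[unfolded RDP1_def, rule_format, OF conjI[OF p(1) conjI[OF p(2) conjI[OF p(3) conjI[OF p(4) s]]]]]
  obtain c11 c12 c21 c22 where
    c: "lex_le le 0 c11" "lex_le le 0 c12" "lex_le le 0 c21" "lex_le le 0 c22"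
    "((0::int), a1) = c11 + c12" "((0::int), a2) = c21 + c22" "((0::int), b1) = c11 + c21" "((0::int),b2) = c12 + c22"
    and cm: "\<And>x y. lex_le le 0 x \<and> lex_le le x c12 \<and> lex_le le 0 y \<and> lex_le le y c21 \<Longrightarrow> x + y = y + x"
    by blast
  have f: "fst c11 \<ge> 0" "fst c12 \<ge> 0" "fst c21 \<ge> 0" "fst c22 \<ge> 0"
    using c(1-4) by (auto simp: lex_le_def)
  have e1: "fst c11 + fst c12 = 0" "fst c21 + fst c22 = 0"
    using arg_cong[OF c(5), of fst] arg_cong[OF c(6), of fst] by simp_all
  have z: "fst c11 = 0" "fst c12 = 0" "fst c21 = 0" "fst c22 = 0" using e1 f by linarith+
  have e2: "a1 = snd c11 + snd c12" "a2 = snd c21 + snd c22" "b1 = snd c11 + snd c21" "b2 = snd c12 + snd c22"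
    using arg_cong[OF c(5), of snd] arg_cong[OF c(6), of snd] arg_cong[OF c(7), of snd] arg_cong[OF c(8), of snd] by simp_all
  have pos: "le 0 (snd c11)" "le 0 (snd c12)" "le 0 (snd c21)" "le 0 (snd c22)"
    using c(1-4) z by (auto simp: lex_le_def)
  have comm: "\<forall>x y. le 0 x \<and> le x (snd c12) \<and> le 0 y \<and> le y (snd c21) \<longrightarrow> x + y = y + x"
  proof (intro allI impI)
    fix x y assume xy: "le 0 x \<and> le x (snd c12) \<and> le 0 y \<and> le y (snd c21)"
    have "((0::int), x) + (0, y) = (0, y) + (0, x)"
      using xy z by (intro cm) (simp add: lex_le_def)
    then show "x + y = y + x" by simp
  qed
  show "\<exists>c11 c12 c21 c22. le 0 c11 \<and> le 0 c12 \<and> le 0 c21 \<and> le 0 c22 \<and>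
           a1 = c11 + c12 \<and> a2 = c21 + c22 \<and> b1 = c11 + c21 \<and> b2 = c12 + c22 \<and>
           (\<forall>x y. le 0 x \<and> le x c12 \<and> le 0 y \<and> le y c21 \<longrightarrow> x + y = y + x)"
    using pos e2 comm by blast
qed

lemma fwd_directed:
  fixes le :: "'a::group_add \<Rightarrow> 'a \<Rightarrow> bool"
  assumes po: "po_group le" and R: "RDP1 (lex_le le)"
  shows "directed le"
  unfolding directed_def
proof (intro allI)
  fix a b :: 'a
  obtain u where u: "le 0 u" "le (-a + b) u" using upper_of_zero[OF po R] by blast
  have "le (a + 0) (a + u)" using po_addl[OF po u(1)] .
  moreover have "le (a + (-a + b)) (a + u)" using po_addl[OF po u(2)] .
  ultimately show "\<exists>c. le a c \<and> le b c" by (auto simp: add.assoc[symmetric])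
qed

lemma bwd:
  fixes le :: "'a::group_add \<Rightarrow> 'a \<Rightarrow> bool"
  assumes po: "po_group le" and D: "directed le" and R: "RDP1 le"
  shows "RDP1 (lex_le le)"
  unfolding RDP1_def
proof (intro allI impI)
  fix a1 a2 b1 b2 :: "int \<times> 'a"
  assume h: "lex_le le 0 a1 \<and> lex_le le 0 a2 \<and> lex_le le 0 b1 \<and> lex_le le 0 b2 \<and> a1 + a2 = b1 + b2"
  have s: "a1 + a2 = b1 + b2" using h by blast
  have f: "fst a1 \<ge> 0" "fst a2 \<ge> 0" "fst b1 \<ge> 0" "fst b2 \<ge> 0"
    using h by (auto simp: lex_le_def)
  have fs: "fst a1 + fst a2 = fst b1 + fst b2" using arg_cong[OF s, of fst] by simp
  have ss: "snd a1 + snd a2 = snd b1 + snd b2" using arg_cong[OF s, of snd] by simp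
  let ?G = "\<lambda>c11 c12 c21 c22. lex_le le 0 c11 \<and> lex_le le 0 c12 \<and> lex_le le 0 c21 \<and> lex_le le 0 c22 \<and>
           a1 = c11 + c12 \<and> a2 = c21 + c22 \<and> b1 = c11 + c21 \<and> b2 = c12 + c22 \<and>
           (\<forall>x y. lex_le le 0 x \<and> lex_le le x c12 \<and> lex_le le 0 y \<and> lex_le le y c21 \<longrightarrow> x + y = y + x)"
  consider "fst a1 < fst b1" | "fst b1 < fst a1" | "fst a1 = fst b1" by linarith
  then show "\<exists>c11 c12 c21 c22. ?G c11 c12 c21 c22"
  proof cases
    case 1
    have e: "a2 = (-a1 + b1) + b2"
    proof -
      have "a2 = -a1 + (a1 + a2)" by (simp add: add.assoc[symmetric])
      also have "\<dots> = (-a1 + b1) + b2" using s by (simp add: add.assoc)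
      finally show ?thesis .
    qed
    have "lex_le le 0 (-a1 + b1)" using 1 by (simp add: lex_le_def)
    moreover have "\<forall>x y. lex_le le 0 x \<and> lex_le le x 0 \<and> lex_le le 0 y \<and> lex_le le y (-a1+b1) \<longrightarrow> x + y = y + x"
      using lex_le_zero_antisym[OF po] by fastforce
    moreover have "lex_le le 0 0" using po by (simp add: lex_le_def po_group_def)
    ultimately have "?G a1 0 (-a1 + b1) b2" using h e by (simp add: add.assoc[symmetric])
    then show ?thesis by blast
  next
    case 2
    have e: "b2 = (-b1 + a1) + a2"
    proof -
      have "b2 = -b1 + (b1 + b2)" by (simp add: add.assoc[symmetric])
      also have "\<dots> = (-b1 + a1) + a2" using s by (simp add: add.assoc)
      finally show ?thesis .
    qed
    have "lex_le le 0 (-b1 + a1)" using 2 by (simp add: lex_le_def)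
    moreover have "\<forall>x y. lex_le le 0 x \<and> lex_le le x (-b1 + a1) \<and> lex_le le 0 y \<and> lex_le le y 0 \<longrightarrow> x + y = y + x"
      using lex_le_zero_antisym[OF po] by fastforce
    moreover have "lex_le le 0 0" using po by (simp add: lex_le_def po_group_def)
    ultimately have "?G b1 (-b1 + a1) 0 a2" using h e by (simp add: add.assoc[symmetric])
    then show ?thesis by blast
  next
    case 3
    have f2: "fst a2 = fst b2" using 3 fs by linarith
    obtain e where e: "le 0 (e + snd a1)" "le 0 (e + snd b1)" "fst a1 = 0 \<longrightarrow> e = 0"
    proof (cases "fst a1 = 0")
      case True
      then have "le 0 (snd a1)" "le 0 (snd b1)" using h 3 by (auto simp: lex_le_def)
      then show ?thesis using that[of 0] True by simp
    next
      case False
      obtain c where c: "le (- snd a1) c" "le (- snd b1) c" using D unfolding directed_def by blast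
      have "le (- snd a1 + snd a1) (c + snd a1)" "le (- snd b1 + snd b1) (c + snd b1)"
        using po_addr[OF po c(1)] po_addr[OF po c(2)] by blast+
      then show ?thesis using that[of c] False by simp
    qed
    obtain g where g: "le 0 (snd a2 + g)" "le 0 (snd b2 + g)" "fst a2 = 0 \<longrightarrow> g = 0"
    proof (cases "fst a2 = 0")
      case True
      then have "le 0 (snd a2)" "le 0 (snd b2)" using h f2 by (auto simp: lex_le_def)
      then show ?thesis using that[of 0] True by simp
    next
      case False
      obtain c where c: "le (- snd a2) c" "le (- snd b2) c" using D unfolding directed_def by blast
      have "le (snd a2 + - snd a2) (snd a2 + c)" "le (snd b2 + - snd b2) (snd b2 + c)"
        using po_addl[OF po c(1)] po_addl[OF po c(2)] by blast+
      then show ?thesis using that[of c] False by simp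
    qed
    have sum: "(e + snd a1) + (snd a2 + g) = (e + snd b1) + (snd b2 + g)"
      using ss by (metis add.assoc)
    from R[unfolded RDP1_def, rule_format, OF conjI[OF e(1) conjI[OF g(1) conjI[OF e(2) conjI[OF g(2) sum]]]]]
    obtain d11 d12 d21 d22 where
      d: "le 0 d11" "le 0 d12" "le 0 d21" "le 0 d22"
      "e + snd a1 = d11 + d12" "snd a2 + g = d21 + d22" "e + snd b1 = d11 + d21" "snd b2 + g = d12 + d22"
      and cm: "\<forall>x y. le 0 x \<and> le x d12 \<and> le 0 y \<and> le y d21 \<longrightarrow> x + y = y + x"
      by blast
    define c11 where "c11 = (fst a1, -e + d11)"
    define c12 where "c12 = ((0::int), d12)"
    define c21 where "c21 = ((0::int), d21)"
    define c22 where "c22 = (fst a2, d22 + -g)"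
    have sa1: "snd a1 = -e + d11 + d12" using d(5)
      by (metis add.assoc add_minus_cancel)
    have sb1: "snd b1 = -e + d11 + d21" using d(7)
      by (metis add.assoc add_minus_cancel)
    have sa2: "snd a2 = d21 + d22 + -g" using d(6)
      by (metis add.assoc add.right_inverse add_0_right)
    have sb2: "snd b2 = d12 + d22 + -g" using d(8)
      by (metis add.assoc add.right_inverse add_0_right)
    have "a1 = c11 + c12" using sa1 by (simp add: c11_def c12_def prod_eq_iff add.assoc diff_conv_add_uminus del: add_uminus_conv_diff)
    moreover have "b1 = c11 + c21" using sb1 3 by (simp add: c11_def c21_def prod_eq_iff add.assoc diff_conv_add_uminus del: add_uminus_conv_diff)
    moreover have "a2 = c21 + c22" using sa2 by (simp add: c22_def c21_def prod_eq_iff add.assoc diff_conv_add_uminus del: add_uminus_conv_diff)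
    moreover have "b2 = c12 + c22" using sb2 f2 by (simp add: c22_def c12_def prod_eq_iff add.assoc diff_conv_add_uminus del: add_uminus_conv_diff)
    moreover have "lex_le le 0 c11" using f(1) e(3) d(1) by (auto simp: c11_def lex_le_def)
    moreover have "lex_le le 0 c22" using f(2) g(3) d(4) by (auto simp: c22_def lex_le_def)
    moreover have "lex_le le 0 c12" "lex_le le 0 c21" using d(2,3) by (auto simp: c12_def c21_def lex_le_def)
    moreover have "\<forall>x y. lex_le le 0 x \<and> lex_le le x c12 \<and> lex_le le 0 y \<and> lex_le le y c21 \<longrightarrow> x + y = y + x"
    proof (intro allI impI)
      fix x y :: "int \<times> 'a"
      assume xy: "lex_le le 0 x \<and> lex_le le x c12 \<and> lex_le le 0 y \<and> lex_le le y c21"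
      then have "fst x = 0" "fst y = 0" "le 0 (snd x)" "le (snd x) d12" "le 0 (snd y)" "le (snd y) d21"
        by (auto simp: lex_le_def c12_def c21_def)
      then have "snd x + snd y = snd y + snd x" using cm by blast
      then show "x + y = y + x" using \<open>fst x = 0\<close> \<open>fst y = 0\<close> by (simp add: prod_eq_iff)
    qed
    ultimately have "?G c11 c12 c21 c22" by blast
    then show ?thesis by blast
  qed
qed

theorem theorem3p7:
  fixes le :: "'a::group_add \<Rightarrow> 'a \<Rightarrow> bool"
  assumes "po_group le"
  shows "RDP1 (lex_le le) \<longleftrightarrow> directed le \<and> RDP1 le"
  using fwd_RDP1[OF assms] fwd_directed[OF assms] bwd[OF assms] by blast

end
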